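(* Let $A_\Gamma$ be an Artin group with monoid $A_\Gamma^+$. For any vertex $v=[\alpha]_T$ of $\mathcal D_\Gamma^+$, the map $\iota$ sends the upward link of $[\alpha]_T$ in $\mathcal D_\Gamma^+$ to a full subcomplex of the upward link of $\alpha A_T$ in $\mathcal D_\Gamma$.
   Context: Let $\Gamma$ be a finite simple graph with vertex set $S$, edges $(s,t)$ labelled by integers $m_{st}\ge2$. The Artin group $A_\Gamma$ has presentation $\langle S\mid sts\cdots=tst\cdots \ (\text{both of length } m_{st})\ \forall (s,t)\in E\rangle$ and the Artin monoid $A_\Gamma^+$ has the same positive presentation, regarded as a submonoid of $A_\Gamma$. For $T\subseteq S$, $A_T$, $A_T^+$ are the subgroup/submonoid generated by $T$; $\mathcal S^f$ is the set of $T\subseteq S$ whose Coxeter group $W_T$ (presentation of $A_T$ plus $s^2=e$) is finite. The Deligne complex $\mathcal D_\Gamma$ is the cube complex with vertices the cosets $gA_T$ ($g\in A_\Gamma$, $T\in\mathcal S^f$), ordered by inclusion, where for $gA_T\subseteq gA_{T'}$ the interval $[gA_T,gA_{T'}]$ spans a cube of dimension $|T'\setminus T|$. For $\alpha,\beta\in A_\Gamma^+$ write $\alpha\sim_T\beta$ if $\alpha t=\beta t'$ for some $t,t'\in A_T^+$; $\approx_T$ is its transitive closure and $[\alpha]_T$ the class of $\alpha$. The monoid Deligne complex $\mathcal D_\Gamma^+$ is the cube complex with vertices $[\alpha]_T$ ($\alpha\in A_\Gamma^+$, $T\in\mathcal S^f$) ordered by inclusion, where for $T_1\subseteq T_2$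 in $\mathcal S^f$ the interval $[[\alpha]_{T_1},[\alpha]_{T_2}]$ spans a cube of dimension $|T_2\setminus T_1|$. The map $\iota:\mathcal D_\Gamma^+\to\mathcal D_\Gamma$ sends $[\alpha]_T\mapsto\alpha A_T$ (an embedding of cube complexes). The link of a vertex $v$ in a cube complex is the simplicial complex with a $k$-simplex for each $(k+1)$-cube containing $v$ (vertices correspond to edges at $v$, i.e. to vertices adjacent to $v$). The upward (resp. downward) link of a vertex $v$ in $\mathcal D_\Gamma^+$ or $\mathcal D_\Gamma$ is the subcomplex of its link spanned by the vertices corresponding to adjacent vertices (cosets) that contain (resp. are contained in) the coset $v$. A subcomplex $K$ of a simplicial complex $L$ is full if any set of vertices of $K$ spanning a simplex in $L$ spans a simplex in $K$. *)

theory Defs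
  imports Main
begin

text \<open>Artin graph: finite vertex set S, symmetric irreflexive edge set E, labels m s t \<ge> 2.
 Non-edges carry no relation (m = infinity).\<close>

definition artin_graph :: "'a set \<Rightarrow> ('a \<times> 'a) set \<Rightarrow> ('a \<Rightarrow> 'a \<Rightarrow> nat) \<Rightarrow> bool" where
  "artin_graph S E m \<longleftrightarrow> finite S \<and> E \<subseteq> S \<times> S \<and> sym E \<and> (\<forall>s. (s, s) \<notin> E)
     \<and> (\<forall>s t. (s, t) \<in> E \<longrightarrow> 2 \<le> m s t \<and> m s t = m t s)"

type_synonym 'a word = "('a \<times> bool) list"

fun alt :: "'a \<Rightarrow> 'a \<Rightarrow> nat \<Rightarrow> 'a list" where
  "alt s t 0 = []"
| "alt s t (Suc n) = s # alt t s n"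

definition posw :: "'a list \<Rightarrow> 'a word" where
  "posw w = map (\<lambda>x. (x, True)) w"

text \<open>Word equivalence defining the Artin group A_Gamma (letters (s,True) = s, (s,False) = s^-1).\<close>
inductive artin_eq :: "'a set \<Rightarrow> ('a \<times> 'a) set \<Rightarrow> ('a \<Rightarrow> 'a \<Rightarrow> nat) \<Rightarrow> 'a word \<Rightarrow> 'a word \<Rightarrow> bool"
  for S E m where
  refl: "artin_eq S E m w w"
| sym: "artin_eq S E m u v \<Longrightarrow> artin_eq S E m v u"
| trans: "artin_eq S E m u v \<Longrightarrow> artin_eq S E m v w \<Longrightarrow> artin_eq S E m u w"
| cancel: "s \<in> S \<Longrightarrow> artin_eq S E m (u @ [(s, b), (s, \<not> b)] @ v) (u @ v)"
| braid: "(s, t) \<in> E \<Longrightarrow>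
     artin_eq S E m (u @ posw (alt s t (m s t)) @ v) (u @ posw (alt t s (m s t)) @ v)"

definition acls :: "'a set \<Rightarrow> ('a \<times> 'a) set \<Rightarrow> ('a \<Rightarrow> 'a \<Rightarrow> nat) \<Rightarrow> 'a word \<Rightarrow> 'a word set" where
  "acls S E m w = {u \<in> lists (S \<times> UNIV). artin_eq S E m u w}"

definition artin_group :: "'a set \<Rightarrow> ('a \<times> 'a) set \<Rightarrow> ('a \<Rightarrow> 'a \<Rightarrow> nat) \<Rightarrow> 'a word set set" where
  "artin_group S E m = acls S E m ` lists (S \<times> UNIV)"

definition pos_words :: "'a set \<Rightarrow> 'a word set" where
  "pos_words T = lists (T \<times> {True})"

text \<open>The Artin monoid, regarded as the submonoid of A_Gamma generated by S.\<close>
definition artin_monoid :: "'a set \<Rightarrow> ('a \<times> 'a) set \<Rightarrow> ('a \<Rightarrow> 'a \<Rightarrow> nat) \<Rightarrow> 'a word set set" where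
  "artin_monoid S E m = acls S E m ` pos_words S"

definition coset :: "'a set \<Rightarrow> ('a \<times> 'a) set \<Rightarrow> ('a \<Rightarrow> 'a \<Rightarrow> nat) \<Rightarrow> 'a word set \<Rightarrow> 'a set \<Rightarrow> 'a word set set" where
  "coset S E m g T = {acls S E m (a @ v) | a v. a \<in> g \<and> v \<in> lists (T \<times> UNIV)}"

inductive cox_eq :: "('a \<times> 'a) set \<Rightarrow> ('a \<Rightarrow> 'a \<Rightarrow> nat) \<Rightarrow> 'a set \<Rightarrow> 'a list \<Rightarrow> 'a list \<Rightarrow> bool"
  for E m T where
  refl: "cox_eq E m T w w"
| sym: "cox_eq E m T u v \<Longrightarrow> cox_eq E m T v u"
| trans: "cox_eq E m T u v \<Longrightarrow> cox_eq E m T v w \<Longrightarrow> cox_eq E m T u w"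
| square: "s \<in> T \<Longrightarrow> cox_eq E m T (u @ [s, s] @ v) (u @ v)"
| braid: "(s, t) \<in> E \<Longrightarrow> s \<in> T \<Longrightarrow> t \<in> T \<Longrightarrow>
     cox_eq E m T (u @ alt s t (m s t) @ v) (u @ alt t s (m s t) @ v)"

definition coxeter_finite :: "('a \<times> 'a) set \<Rightarrow> ('a \<Rightarrow> 'a \<Rightarrow> nat) \<Rightarrow> 'a set \<Rightarrow> bool" where
  "coxeter_finite E m T \<longleftrightarrow> finite ((\<lambda>w. {u \<in> lists T. cox_eq E m T u w}) ` lists T)"

definition Sf :: "'a set \<Rightarrow> ('a \<times> 'a) set \<Rightarrow> ('a \<Rightarrow> 'a \<Rightarrow> nat) \<Rightarrow> 'a set set" where
  "Sf S E m = {T. T \<subseteq> S \<and> coxeter_finite E m T}"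

definition simT :: "'a set \<Rightarrow> ('a \<times> 'a) set \<Rightarrow> ('a \<Rightarrow> 'a \<Rightarrow> nat) \<Rightarrow> 'a set \<Rightarrow> 'a word set \<Rightarrow> 'a word set \<Rightarrow> bool" where
  "simT S E m T \<alpha> \<beta> \<longleftrightarrow> \<alpha> \<in> artin_monoid S E m \<and> \<beta> \<in> artin_monoid S E m \<and>
     (\<exists>a b t t'. a \<in> \<alpha> \<and> b \<in> \<beta> \<and> t \<in> pos_words T \<and> t' \<in> pos_words T \<and>
        acls S E m (a @ t) = acls S E m (b @ t'))"

definition mcls :: "'a set \<Rightarrow> ('a \<times> 'a) set \<Rightarrow> ('a \<Rightarrow> 'a \<Rightarrow> nat) \<Rightarrow> 'a set \<Rightarrow> 'a word set \<Rightarrow> 'a word set set" where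
  "mcls S E m T \<alpha> = {\<beta>. (simT S E m T)\<^sup>*\<^sup>* \<alpha> \<beta>}"

text \<open>T0 with s toggled: the neighbour of vertex T0 in direction s.\<close>
definition toggle :: "'a set \<Rightarrow> 'a \<Rightarrow> 'a set" where
  "toggle T0 s = (if s \<in> T0 then T0 - {s} else insert s T0)"

text \<open>Link of vertex v in the Deligne complex D_Gamma: for every cube
  [g A_T1, g A_T2] (T1 strictly contained in T2, both in S^f) containing v = g A_T0,
  the simplex whose vertices are the neighbours of v in that cube.\<close>
definition linkD :: "'a set \<Rightarrow> ('a \<times> 'a) set \<Rightarrow> ('a \<Rightarrow> 'a \<Rightarrow> nat) \<Rightarrow> 'a word set set \<Rightarrow> 'a word set set set set" where
  "linkD S E m v = { {coset S E m g (toggle T0 s) | s. s \<in> T2 - T1} | g T0 T1 T2.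
      g \<in> artin_group S E m \<and> T1 \<in> Sf S E m \<and> T2 \<in> Sf S E m \<and> T1 \<subset> T2 \<and>
      T1 \<subseteq> T0 \<and> T0 \<subseteq> T2 \<and> coset S E m g T0 = v }"

definition uplinkD :: "'a set \<Rightarrow> ('a \<times> 'a) set \<Rightarrow> ('a \<Rightarrow> 'a \<Rightarrow> nat) \<Rightarrow> 'a word set set \<Rightarrow> 'a word set set set set" where
  "uplinkD S E m v = {\<sigma> \<in> linkD S E m v. \<forall>u \<in> \<sigma>. v \<subseteq> u}"

definition linkP :: "'a set \<Rightarrow> ('a \<times> 'a) set \<Rightarrow> ('a \<Rightarrow> 'a \<Rightarrow> nat) \<Rightarrow> 'a word set set \<Rightarrow> 'a word set set set set" where
  "linkP S E m v = { {mcls S E m (toggle T0 s) \<beta> | s. s \<in> T2 - T1} | \<beta> T0 T1 T2.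
      \<beta> \<in> artin_monoid S E m \<and> T1 \<in> Sf S E m \<and> T2 \<in> Sf S E m \<and> T1 \<subset> T2 \<and>
      T1 \<subseteq> T0 \<and> T0 \<subseteq> T2 \<and> mcls S E m T0 \<beta> = v }"

definition uplinkP :: "'a set \<Rightarrow> ('a \<times> 'a) set \<Rightarrow> ('a \<Rightarrow> 'a \<Rightarrow> nat) \<Rightarrow> 'a word set set \<Rightarrow> 'a word set set set set" where
  "uplinkP S E m v = {\<sigma> \<in> linkP S E m v. \<forall>u \<in> \<sigma>. v \<subseteq> u}"

definition iota_set :: "'a set \<Rightarrow> ('a \<times> 'a) set \<Rightarrow> ('a \<Rightarrow> 'a \<Rightarrow> nat) \<Rightarrow> 'a word set set set \<Rightarrow> 'a word set set set" where
  "iota_set S E m \<sigma> = {coset S E m \<alpha> T | \<alpha> T. \<alpha> \<in> artin_monoid S E m \<and> T \<in> Sf S E m \<and> mcls S E m T \<alpha> \<in> \<sigma>}"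

text \<open>K is a full subcomplex of L (complexes given by their simplices, as vertex sets).\<close>
definition full_subcomplex :: "'v set set \<Rightarrow> 'v set set \<Rightarrow> bool" where
  "full_subcomplex K L \<longleftrightarrow> K \<subseteq> L \<and> (\<forall>\<sigma> \<in> L. \<sigma> \<subseteq> \<Union>K \<longrightarrow> \<sigma> \<in> K)"

end

theory Submission
  imports Defs Complex_Main
begin



fun cheb :: "real \<Rightarrow> nat \<Rightarrow> real" where
  "cheb c 0 = 0"
| "cheb c (Suc 0) = 1"
| "cheb c (Suc (Suc k)) = 2 * c * cheb c (Suc k) - cheb c k"

lemma cheb_sin_aux:
  "cheb (cos th) k * sin th = sin (real k * th) \<and> cheb (cos th) (Suc k) * sin th = sin (real (Suc k) * th)"
proof (induction k)
  case 0 then show ?case by simp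
next
  case (Suc k)
  have "sin (real (Suc (Suc k)) * th) = 2 * cos th * sin (real (Suc k) * th) - sin (real k * th)"
  proof -
    have a: "real (Suc (Suc k)) * th = real (Suc k) * th + th" by (simp add: algebra_simps)
    have b: "real k * th = real (Suc k) * th - th" by (simp add: algebra_simps)
    show ?thesis unfolding a b sin_add sin_diff by (simp add: algebra_simps)
  qed
  then show ?case using Suc by (simp add: algebra_simps)
qed

lemma cheb_sin: "cheb (cos th) k * sin th = sin (real k * th)"
  using cheb_sin_aux by blast

lemma cheb_one_aux: "cheb 1 k = real k \<and> cheb 1 (Suc k) = real (Suc k)"
  by (induction k) auto

lemma cheb_one: "cheb 1 k = real k"
  using cheb_one_aux by blast

lemma alt_snoc: "alt x y (Suc k) = alt x y k @ [if even k then x else y]"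
  by (induction k arbitrary: x y) auto

lemma alt_add: "alt x y (a + b) = alt x y a @ alt (if even a then x else y) (if even a then y else x) b"
  by (induction a arbitrary: x y) auto

lemma alt_set: "set (alt x y k) \<subseteq> {x, y}"
  by (induction k arbitrary: x y) auto

lemma length_alt[simp]: "length (alt x y k) = k"
  by (induction k arbitrary: x y) auto

locale ag =
  fixes S :: "'a set" and E :: "('a \<times> 'a) set" and m :: "'a \<Rightarrow> 'a \<Rightarrow> nat"
  assumes AG: "artin_graph S E m"
begin

lemma finS: "finite S" using AG unfolding artin_graph_def by blast
lemma ES: "(s, t) \<in> E \<Longrightarrow> s \<in> S \<and> t \<in> S" using AG unfolding artin_graph_def by blast
lemma Esym: "(s, t) \<in> E \<Longrightarrow> (t, s) \<in> E" using AG unfolding artin_graph_def sym_def by blast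
lemma Eirr: "(s, t) \<in> E \<Longrightarrow> s \<noteq> t" using AG unfolding artin_graph_def by blast
lemma Em2: "(s, t) \<in> E \<Longrightarrow> 2 \<le> m s t" using AG unfolding artin_graph_def by blast
lemma Emsym: "(s, t) \<in> E \<Longrightarrow> m s t = m t s" using AG unfolding artin_graph_def by blast

definition Bm :: "'a \<Rightarrow> 'a \<Rightarrow> real" where
  "Bm x y = (if x = y then 1 else if (x, y) \<in> E then - cos (pi / real (m x y)) else -1)"

lemma Bm_sym: "Bm x y = Bm y x"
  unfolding Bm_def using Esym Emsym by (auto)

definition al :: "'a \<Rightarrow> 'a \<Rightarrow> real" where
  "al x = (\<lambda>y. if y = x then 1 else 0)"

definition Bf :: "('a \<Rightarrow> real) \<Rightarrow> ('a \<Rightarrow> real) \<Rightarrow> real" where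
  "Bf u v = (\<Sum>i\<in>S. \<Sum>j\<in>S. u i * Bm i j * v j)"

lemma Bf_sym: "Bf u v = Bf v u"
  unfolding Bf_def
  by (subst sum.swap) (simp add: Bm_sym mult.commute mult.left_commute)

lemma Bf_al_left: "x \<in> S \<Longrightarrow> Bf (al x) v = (\<Sum>j\<in>S. Bm x j * v j)"
proof -
  assume x: "x \<in> S"
  have "Bf (al x) v = (\<Sum>i\<in>S. if i = x then (\<Sum>j\<in>S. Bm x j * v j) else 0)"
    unfolding Bf_def al_def by (rule sum.cong) auto
  also have "\<dots> = (\<Sum>j\<in>S. Bm x j * v j)" using x finS by (simp add: sum.delta)
  finally show ?thesis .
qed

lemma Bf_al_al: "x \<in> S \<Longrightarrow> y \<in> S \<Longrightarrow> Bf (al x) (al y) = Bm x y"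
proof -
  assume x: "x \<in> S" and y: "y \<in> S"
  have "Bf (al x) (al y) = (\<Sum>j\<in>S. if j = y then Bm x y else 0)"
    unfolding Bf_al_left[OF x] by (rule sum.cong) (auto simp: al_def)
  also have "\<dots> = Bm x y" using y finS by (simp add: sum.delta)
  finally show ?thesis .
qed

lemma Bf_lin2: "Bf u (\<lambda>y. a * v y + b * w y) = a * Bf u v + b * Bf u w"
  unfolding Bf_def by (simp add: algebra_simps sum.distrib sum_distrib_left)

lemma Bf_diff2: "Bf u (\<lambda>y. v y - b * w y) = Bf u v - b * Bf u w"
  unfolding Bf_def by (simp add: algebra_simps sum_subtractf sum_distrib_left)

lemma Bf_diff1: "Bf (\<lambda>y. v y - b * w y) u = Bf v u - b * Bf w u"
  using Bf_diff2 Bf_sym by metis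

lemma Bf_neg1: "Bf (\<lambda>y. - v y) u = - Bf v u"
  unfolding Bf_def by (simp add: sum_negf)

lemma Bf_lin1: "Bf (\<lambda>y. a * v y + b * w y) u = a * Bf v u + b * Bf w u"
  using Bf_lin2 Bf_sym by metis

definition sg :: "'a \<Rightarrow> ('a \<Rightarrow> real) \<Rightarrow> ('a \<Rightarrow> real)" where
  "sg x v = (\<lambda>y. v y - 2 * Bf (al x) v * al x y)"

fun rho :: "'a list \<Rightarrow> ('a \<Rightarrow> real) \<Rightarrow> ('a \<Rightarrow> real)" where
  "rho [] v = v"
| "rho (x # w) v = sg x (rho w v)"

lemma rho_append: "rho (u @ w) v = rho u (rho w v)"
  by (induction u) auto

lemma sg_lin: "sg x (\<lambda>y. a * u y + b * v y) = (\<lambda>y. a * sg x u y + b * sg x v y)"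
  unfolding sg_def by (rule ext) (simp add: Bf_lin2 algebra_simps)

lemma rho_lin: "rho w (\<lambda>y. a * u y + b * v y) = (\<lambda>y. a * rho w u y + b * rho w v y)"
  by (induction w) (auto simp: sg_lin)

lemma Bf_sg: "x \<in> S \<Longrightarrow> Bf (al x) (sg x v) = - Bf (al x) v"
proof -
  assume x: "x \<in> S"
  have "Bf (al x) (sg x v) = Bf (al x) v - (2 * Bf (al x) v) * Bf (al x) (al x)"
    unfolding sg_def by (rule Bf_diff2)
  then show ?thesis using x by (simp add: Bf_al_al Bm_def)
qed

lemma sg_sg: "x \<in> S \<Longrightarrow> sg x (sg x v) = v"
  using Bf_sg[of x v] unfolding sg_def[of x "sg x v"] by (rule_tac ext) (simp add: sg_def)

lemma Bf_sg_sg: "x \<in> S \<Longrightarrow> Bf (sg x u) (sg x v) = Bf u v"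
proof -
  assume x: "x \<in> S"
  let ?p = "Bf (al x) u" and ?q = "Bf (al x) v"
  have "Bf (sg x u) (sg x v) = Bf u (sg x v) - (2 * ?p) * Bf (al x) (sg x v)"
    unfolding sg_def[of x u] by (rule Bf_diff1)
  also have "\<dots> = Bf u v - (2 * ?q) * Bf u (al x) - (2 * ?p) * (- ?q)"
  proof -
    have "Bf u (sg x v) = Bf u v - (2 * ?q) * Bf u (al x)" unfolding sg_def by (rule Bf_diff2)
    then show ?thesis using Bf_sg[OF x, of v] by simp
  qed
  also have "Bf u (al x) = ?p" by (rule Bf_sym)
  finally show ?thesis by (simp add: algebra_simps)
qed

lemma rho_iso: "set w \<subseteq> S \<Longrightarrow> Bf (rho w u) (rho w v) = Bf u v"
  by (induction w) (auto simp: Bf_sg_sg)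

lemma rho_span: "set w \<subseteq> {s, t} \<Longrightarrow> \<exists>p q. rho w v = (\<lambda>y. v y + p * al s y + q * al t y)"
proof (induction w)
  case Nil then show ?case by (rule_tac x=0 in exI, rule_tac x=0 in exI) auto
next
  case (Cons x w)
  then obtain p q where pq: "rho w v = (\<lambda>y. v y + p * al s y + q * al t y)" by auto
  have "x = s \<or> x = t" using Cons by auto
  then show ?case
  proof
    assume "x = s"
    then show ?thesis using pq
      by (rule_tac x="p - 2 * Bf (al x) (rho w v)" in exI, rule_tac x=q in exI)
         (auto simp: sg_def algebra_simps)
  next
    assume "x = t"
    then show ?thesis using pq
      by (rule_tac x="p" in exI, rule_tac x="q - 2 * Bf (al x) (rho w v)" in exI)
         (auto simp: sg_def algebra_simps)
  qed
qed

end



context ag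
begin

lemma sg_al_self: "x \<in> S \<Longrightarrow> sg x (al x) = (\<lambda>z. - al x z)"
proof -
  assume x: "x \<in> S"
  have "Bf (al x) (al x) = 1" using x by (simp add: Bf_al_al Bm_def)
  then have "sg x (al x) = (\<lambda>z. al x z - 2 * 1 * al x z)" by (simp add: sg_def)
  then show ?thesis by simp
qed

lemma sg_al_other: "x \<in> S \<Longrightarrow> y \<in> S \<Longrightarrow> sg x (al y) = (\<lambda>z. al y z + 2 * (- Bm x y) * al x z)"
proof -
  assume x: "x \<in> S" and y: "y \<in> S"
  have "Bf (al x) (al y) = Bm x y" using x y by (simp add: Bf_al_al)
  then have "sg x (al y) = (\<lambda>z. al y z - 2 * Bm x y * al x z)" by (simp add: sg_def)
  then show ?thesis by simp
qed

lemma lemD: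
  assumes st: "s \<noteq> t" "s \<in> S" "t \<in> S"
  shows "(x = s \<and> y = t) \<or> (x = t \<and> y = s) \<Longrightarrow>
    rho (alt x y k) (al (if even k then x else y)) =
      (\<lambda>z. cheb (- Bm s t) (Suc k) * al x z + cheb (- Bm s t) k * al y z)"
proof (induction k arbitrary: x y)
  case 0
  then show ?case by (auto simp: al_def)
next
  case (Suc k)
  let ?c = "- Bm s t"
  have IH: "rho (alt y x k) (al (if even k then y else x)) =
      (\<lambda>z. cheb ?c (Suc k) * al y z + cheb ?c k * al x z)"
    using Suc by auto
  have xy: "x \<in> S" "y \<in> S" "x \<noteq> y" using Suc.prems st by auto
  have cxy: "- Bm x y = ?c" using Suc.prems Bm_sym by auto
  have e1: "alt x y (Suc k) = x # alt y x k" by simp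
  have e2: "(if even (Suc k) then x else y) = (if even k then y else x)" by simp
  have "rho (alt x y (Suc k)) (al (if even (Suc k) then x else y)) =
     sg x (\<lambda>z. cheb ?c (Suc k) * al y z + cheb ?c k * al x z)"
    unfolding e1 e2 rho.simps IH by simp
  also have "\<dots> = (\<lambda>z. cheb ?c (Suc k) * sg x (al y) z + cheb ?c k * sg x (al x) z)"
    by (rule sg_lin)
  also have "\<dots> = (\<lambda>z. cheb ?c (Suc (Suc k)) * al x z + cheb ?c (Suc k) * al y z)"
    using xy cxy by (auto simp: sg_al_self sg_al_other algebra_simps)
  finally show ?case .
qed

lemma rho_alt_last:
  assumes st: "s \<noteq> t" "s \<in> S" "t \<in> S" and xy: "(x = s \<and> y = t) \<or> (x = t \<and> y = s)"
  shows "rho (alt x y (Suc k)) (al (if even k then x else y)) =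
      (\<lambda>z. - (cheb (- Bm s t) (Suc k) * al x z + cheb (- Bm s t) k * al y z))"
proof -
  have L: "(if even k then x else y) \<in> S" using xy st by auto
  have "rho (alt x y (Suc k)) (al (if even k then x else y)) =
     rho (alt x y k) (sg (if even k then x else y) (al (if even k then x else y)))"
    unfolding alt_snoc rho_append by simp
  also have "\<dots> = rho (alt x y k) (\<lambda>z. (-1) * al (if even k then x else y) z + 0 * al x z)"
    using sg_al_self[OF L] by simp
  also have "\<dots> = (\<lambda>z. (-1) * rho (alt x y k) (al (if even k then x else y)) z + 0 * rho (alt x y k) (al x) z)"
    by (rule rho_lin)
  also have "\<dots> = (\<lambda>z. - (cheb (- Bm s t) (Suc k) * al x z + cheb (- Bm s t) k * al y z))"
    using lemD[OF st xy, of k] by simp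
  finally show ?thesis .
qed

end



lemma cheb_special:
  assumes M: "2 \<le> M"
  shows "cheb (cos (pi / real M)) M = 0" "cheb (cos (pi / real M)) (M - 1) = 1"
    "cheb (cos (pi / real M)) (Suc M) = -1"
proof -
  let ?th = "pi / real M"
  have sp: "sin ?th > 0" using sin_pi_divide_n_gt_0[OF M] .
  have Mth: "real M * ?th = pi" using M by simp
  have "cheb (cos ?th) M * sin ?th = sin (real M * ?th)" by (rule cheb_sin)
  then show "cheb (cos ?th) M = 0" using sp Mth by simp
  have "cheb (cos ?th) (M - 1) * sin ?th = sin (real (M - 1) * ?th)" by (rule cheb_sin)
  also have "real (M - 1) * ?th = pi - ?th"
  proof -
    have "real (M - 1) = real M - 1" using M by (simp add: of_nat_diff)
    then have "real (M - 1) * ?th = real M * ?th - ?th" by (metis left_diff_distrib mult_1)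
    then show ?thesis using Mth by simp
  qed
  finally show "cheb (cos ?th) (M - 1) = 1" using sp by (simp add: sin_pi_minus)
  have "cheb (cos ?th) (Suc M) * sin ?th = sin (real (Suc M) * ?th)" by (rule cheb_sin)
  also have "real (Suc M) * ?th = pi + ?th"
  proof -
    have "real (Suc M) * ?th = real M * ?th + ?th" by (simp only: of_nat_Suc distrib_right mult_1_left add.commute)
    then show ?thesis using Mth by linarith
  qed
  finally have "cheb (cos ?th) (Suc M) * sin ?th = (-1) * sin ?th" by (simp add: sin_periodic_pi2)
  then show "cheb (cos ?th) (Suc M) = -1" using sp by (metis mult_right_cancel less_irrefl)
qed

lemma cheb_nonneg:
  assumes M: "2 \<le> M" and k: "k \<le> M"
  shows "0 \<le> cheb (cos (pi / real M)) k"
proof -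
  let ?th = "pi / real M"
  have sp: "sin ?th > 0" using sin_pi_divide_n_gt_0[OF M] .
  have "0 \<le> sin (real k * ?th)"
  proof (rule sin_ge_zero)
    show "0 \<le> real k * ?th" by simp
    have "real k * ?th \<le> real M * ?th" using k by (intro mult_right_mono) auto
    then show "real k * ?th \<le> pi" using M by simp
  qed
  then have "0 \<le> cheb (cos ?th) k * sin ?th" by (simp add: cheb_sin)
  then show ?thesis using sp by (simp add: zero_le_mult_iff)
qed

lemma cos_sq_lt:
  assumes M: "2 \<le> M" shows "(cos (pi / real M))^2 < 1"
proof -
  have sp: "sin (pi / real M) > 0" using sin_pi_divide_n_gt_0[OF M] .
  have "(sin (pi / real M))^2 + (cos (pi / real M))^2 = 1" by (rule sin_cos_squared_add)
  moreover have "(sin (pi / real M))^2 > 0" using sp by simp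
  ultimately show ?thesis by linarith
qed

context ag
begin

lemma Bf_span: "Bf u (\<lambda>y. v y + p * al s y + q * al t y) = Bf u v + p * Bf u (al s) + q * Bf u (al t)"
  unfolding Bf_def by (simp add: algebra_simps sum.distrib sum_distrib_left)

lemma braid_rho:
  assumes e: "(s, t) \<in> E"
  shows "rho (alt s t (m s t)) = rho (alt t s (m s t))"
proof -
  define M where "M = m s t"
  have M2: "2 \<le> M" using Em2[OF e] M_def by simp
  have st: "s \<noteq> t" "s \<in> S" "t \<in> S" using e Eirr ES by auto
  have ts: "t \<noteq> s" "t \<in> S" "s \<in> S" using st by auto
  define c where "c = cos (pi / real M)"
  have cst: "- Bm s t = c" unfolding c_def M_def Bm_def using st e by simp
  have cts: "- Bm t s = c" using cst Bm_sym by simp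
  have ch: "cheb c M = 0" "cheb c (M - 1) = 1" "cheb c (Suc M) = -1"
    using cheb_special[OF M2] c_def by auto
  obtain K where K: "M = Suc K" using M2 by (cases M) auto
  define f where "f = rho (alt s t M)"
  define g where "g = rho (alt t s M)"
  define Z1 where "Z1 = (if even M then s else t)"
  define Z2 where "Z2 = (if even M then t else s)"
  have f1: "f (al Z1) = (\<lambda>z. - al s z)"
    using lemD[OF st, of s t M] ch unfolding f_def Z1_def cst by simp
  have f2: "f (al Z2) = (\<lambda>z. - al t z)"
  proof -
    have "Z2 = (if even K then s else t)" unfolding Z2_def K by simp
    then show ?thesis using rho_alt_last[OF st, of s t K] ch unfolding f_def cst K by simp
  qed
  have g2: "g (al Z2) = (\<lambda>z. - al t z)"
  proof -
    have "Z2 = (if even M then t else s)" unfolding Z2_def by simp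
    then show ?thesis using lemD[OF ts, of t s M] ch unfolding g_def cts by simp
  qed
  have g1: "g (al Z1) = (\<lambda>z. - al s z)"
  proof -
    have "Z1 = (if even K then t else s)" unfolding Z1_def K by simp
    then show ?thesis using rho_alt_last[OF ts, of t s K] ch unfolding g_def cts K by simp
  qed
  have setf: "set (alt s t M) \<subseteq> S" "set (alt t s M) \<subseteq> S" using alt_set st by fastforce+
  have Z1S: "Z1 \<in> S" and Z2S: "Z2 \<in> S" unfolding Z1_def Z2_def using st by auto
  show ?thesis
  proof (rule ext)
    fix v
    obtain p1 q1 where pq1: "f v = (\<lambda>y. v y + p1 * al s y + q1 * al t y)"
      using rho_span[OF alt_set[of s t M], of v] unfolding f_def by blast
    obtain p2 q2 where pq2: "g v = (\<lambda>y. v y + p2 * al s y + q2 * al t y)"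
      using rho_span[of "alt t s M" s t v] alt_set[of t s M] unfolding g_def by (auto simp: insert_commute)
    have A: "Bf (al s) (f v) = Bf (al s) (g v)"
    proof -
      have "Bf (f (al Z1)) (f v) = Bf (al Z1) v" using rho_iso[OF setf(1)] unfolding f_def by simp
      moreover have "Bf (g (al Z1)) (g v) = Bf (al Z1) v" using rho_iso[OF setf(2)] unfolding g_def by simp
      ultimately show ?thesis using f1 g1 Bf_neg1[of "al s"] by simp
    qed
    have B: "Bf (al t) (f v) = Bf (al t) (g v)"
    proof -
      have "Bf (f (al Z2)) (f v) = Bf (al Z2) v" using rho_iso[OF setf(1)] unfolding f_def by simp
      moreover have "Bf (g (al Z2)) (g v) = Bf (al Z2) v" using rho_iso[OF setf(2)] unfolding g_def by simp
      ultimately show ?thesis using f2 g2 Bf_neg1[of "al t"] by simp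
    qed
    have bss: "Bf (al s) (al s) = 1" "Bf (al t) (al t) = 1" using st by (auto simp: Bf_al_al Bm_def)
    have bst: "Bf (al s) (al t) = - c" "Bf (al t) (al s) = - c" using st cst cts by (auto simp: Bf_al_al)
    have e1: "p1 - c * q1 = p2 - c * q2"
      using A unfolding pq1 pq2 Bf_span bss bst by (simp add: mult.commute)
    have e2: "q1 - c * p1 = q2 - c * p2"
      using B unfolding pq1 pq2 Bf_span bss bst by (simp add: mult.commute)
    have c2: "c^2 < 1" using cos_sq_lt[OF M2] c_def by simp
    have d1: "p1 - p2 = c * (q1 - q2)" using e1 by (simp add: algebra_simps)
    have d2: "q1 - q2 = c * (p1 - p2)" using e2 by (simp add: algebra_simps)
    have "q1 - q2 = c^2 * (q1 - q2)" using d1 d2 by (simp add: power2_eq_square)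
    then have "(q1 - q2) * (1 - c^2) = 0" by (simp add: algebra_simps)
    then have "q1 = q2" using c2 by simp
    then have "p1 = p2" using e1 by simp
    with \<open>q1 = q2\<close> show "rho (alt s t (m s t)) v = rho (alt t s (m s t)) v"
      using pq1 pq2 unfolding f_def g_def M_def by simp
  qed
qed

end



lemma alt_form:
  assumes xy: "x \<noteq> y"
  shows "u \<in> lists {x, y} \<Longrightarrow> \<not> (\<exists>u1 u2 a. u = u1 @ a # a # u2) \<Longrightarrow> u \<noteq> [] \<Longrightarrow>
    \<exists>x' y'. ((x' = x \<and> y' = y) \<or> (x' = y \<and> y' = x)) \<and> u = alt x' y' (length u)"
proof (induction u)
  case Nil then show ?case by simp
next
  case (Cons a u)
  show ?case
  proof (cases "u = []")
    case True
    then show ?thesis using Cons.prems xy by (cases "a = x") auto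
  next
    case False
    have na: "\<not> (\<exists>u1 u2 a. u = u1 @ a # a # u2)"
    proof
      assume "\<exists>u1 u2 b. u = u1 @ b # b # u2"
      then obtain u1 u2 b where "u = u1 @ b # b # u2" by blast
      then have "a # u = (a # u1) @ b # b # u2" by simp
      then show False using Cons.prems(2) by blast
    qed
    obtain x' y' where xy': "(x' = x \<and> y' = y) \<or> (x' = y \<and> y' = x)" and u: "u = alt x' y' (length u)"
      using Cons.IH Cons.prems(1) na False by auto
    obtain n where n: "length u = Suc n" using False by (cases u) auto
    have hd: "u = x' # alt y' x' n" using u n by (metis alt.simps(2))
    have "a \<noteq> x'"
    proof
      assume "a = x'"
      then have "a # u = [] @ a # a # alt y' x' n" using hd by simp
      then show False using Cons.prems(2) by blast
    qed
    then have "a = y'" using Cons.prems(1) xy' by auto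
    then have "a # u = alt y' x' (length (a # u))" using u by simp
    then show ?thesis using xy' by blast
  qed
qed

lemma last_alt: "last (alt x y (Suc k)) = (if even k then x else y)"
  by (induction k arbitrary: x y) auto

context ag
begin

lemma rho_cox:
  assumes JS: "J \<subseteq> S"
  shows "cox_eq E m J u w \<Longrightarrow> rho u = rho w"
proof (induction rule: cox_eq.induct)
  case (square s u v)
  then have "s \<in> S" using JS by auto
  then show ?case by (auto simp: rho_append sg_sg fun_eq_iff)
next
  case (braid s t u v)
  have "rho (alt s t (m s t)) = rho (alt t s (m s t))" using braid(1) by (rule braid_rho)
  then show ?case by (intro ext) (simp add: rho_append)
qed auto

lemma map_fst_posw: "map fst (posw w) = w"
  unfolding posw_def by (induction w) auto

lemma rho_artin:
  "artin_eq S E m u w \<Longrightarrow> rho (map fst u) = rho (map fst w)"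
proof (induction rule: artin_eq.induct)
  case (cancel s u b v)
  then show ?case by (auto simp: rho_append sg_sg fun_eq_iff)
next
  case (braid s t u v)
  have "rho (alt s t (m s t)) = rho (alt t s (m s t))" using braid(1) by (rule braid_rho)
  then show ?case by (intro ext) (simp add: rho_append map_fst_posw)
qed auto

end

locale cox = ag +
  fixes J :: "'a set"
  assumes JS: "J \<subseteq> S"
begin

abbreviation ceq where "ceq \<equiv> cox_eq E m J"

lemma ceq_cong: "ceq u w \<Longrightarrow> ceq (x @ u @ y) (x @ w @ y)"
proof (induction rule: cox_eq.induct)
  case (refl w) then show ?case by (rule cox_eq.refl)
next
  case (sym u v) then show ?case by (blast intro: cox_eq.sym)
next
  case (trans u v w) then show ?case by (metis cox_eq.trans)
next
  case (square s u v)
  then show ?case using cox_eq.square[of s J E m "x @ u" "v @ y"] by simp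
next
  case (braid s t u v)
  then show ?case using cox_eq.braid[of s t E J m "x @ u" "v @ y"] by simp
qed

lemma ceq_par: "ceq u w \<Longrightarrow> even (length u) = even (length w)"
  by (induction rule: cox_eq.induct) auto

lemma ceq_rho: "ceq u w \<Longrightarrow> rho u = rho w"
  using rho_cox[OF JS] .

definition lg :: "'a set \<Rightarrow> 'a list \<Rightarrow> nat" where
  "lg I w = (LEAST n. \<exists>u \<in> lists I. length u = n \<and> ceq u w)"

lemma lg_le: "u \<in> lists I \<Longrightarrow> ceq u w \<Longrightarrow> lg I w \<le> length u"
  unfolding lg_def by (rule Least_le) blast

lemma lg_ex: "u \<in> lists I \<Longrightarrow> ceq u w \<Longrightarrow> \<exists>v \<in> lists I. length v = lg I w \<and> ceq v w"
  unfolding lg_def by (rule LeastI) blast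

lemma lg_ex': "w \<in> lists I \<Longrightarrow> \<exists>v \<in> lists I. length v = lg I w \<and> ceq v w"
  using lg_ex cox_eq.refl by blast

lemma lg_inv: "ceq w w' \<Longrightarrow> lg I w = lg I w'"
proof -
  assume h: "ceq w w'"
  have "\<And>u. ceq u w = ceq u w'" using h by (meson cox_eq.sym cox_eq.trans)
  then show ?thesis unfolding lg_def by simp
qed

lemma lg_par: "w \<in> lists I \<Longrightarrow> even (lg I w) = even (length w)"
  using lg_ex' ceq_par by metis

lemma lg_le_len: "w \<in> lists I \<Longrightarrow> lg I w \<le> length w"
  using lg_le cox_eq.refl by blast

lemma lg_app: "a \<in> lists I \<Longrightarrow> b \<in> lists I \<Longrightarrow> lg I (a @ b) \<le> lg I a + lg I b"
proof -
  assume a: "a \<in> lists I" and b: "b \<in> lists I"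
  obtain a' where a': "a' \<in> lists I" "length a' = lg I a" "ceq a' a" using lg_ex'[OF a] by blast
  obtain b' where b': "b' \<in> lists I" "length b' = lg I b" "ceq b' b" using lg_ex'[OF b] by blast
  have "ceq (a' @ b') (a @ b')" using ceq_cong[OF a'(3), of "[]" b'] by simp
  moreover have "ceq (a @ b') (a @ b)" using ceq_cong[OF b'(3), of a "[]"] by simp
  ultimately have "ceq (a' @ b') (a @ b)" by (rule cox_eq.trans)
  then have "lg I (a @ b) \<le> length (a' @ b')" using a' b' by (intro lg_le) auto
  then show ?thesis using a' b' by simp
qed

lemma lg_mono: "I \<subseteq> I' \<Longrightarrow> w \<in> lists I \<Longrightarrow> lg I' w \<le> lg I w"
proof -
  assume II: "I \<subseteq> I'" and w: "w \<in> lists I"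
  obtain v where v: "v \<in> lists I" "length v = lg I w" "ceq v w" using lg_ex'[OF w] by blast
  have "v \<in> lists I'" using v(1) II by auto
  then show ?thesis using lg_le v by fastforce
qed

lemma ceq_ss: "s \<in> J \<Longrightarrow> ceq (u @ [s, s]) u"
  using cox_eq.square[of s J E m u "[]"] by simp

lemma lg_snoc:
  assumes I: "I \<subseteq> J" and w: "w \<in> lists I" and s: "s \<in> I"
  shows "lg I (w @ [s]) = Suc (lg I w) \<or> lg I w = Suc (lg I (w @ [s]))"
proof -
  have w1: "w @ [s] \<in> lists I" using w s by auto
  have "lg I (w @ [s]) \<le> lg I w + lg I [s]" using lg_app[OF w] s by auto
  also have "lg I [s] \<le> 1" using lg_le_len[of "[s]" I] s by simp
  finally have le1: "lg I (w @ [s]) \<le> Suc (lg I w)" by simp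
  have "ceq (w @ [s, s]) w" using ceq_ss s I by auto
  then have "lg I w = lg I (w @ [s] @ [s])" using lg_inv by (metis append_Cons append_Nil append_assoc)
  also have "\<dots> \<le> lg I (w @ [s]) + lg I [s]" using lg_app[OF w1, of "[s]"] s by auto
  finally have le2: "lg I w \<le> Suc (lg I (w @ [s]))" using lg_le_len[of "[s]" I] s by simp
  have "even (lg I (w @ [s])) \<noteq> even (lg I w)" using lg_par[OF w1] lg_par[OF w] by simp
  moreover have "\<And>a b::nat. even a \<noteq> even b \<Longrightarrow> a \<le> Suc b \<Longrightarrow> b \<le> Suc a \<Longrightarrow> a = Suc b \<or> b = Suc a"
    by presburger
  ultimately show ?thesis using le1 le2 by blast
qed

definition nn :: "('a \<Rightarrow> real) \<Rightarrow> bool" where "nn v \<longleftrightarrow> (\<forall>y. 0 \<le> v y)"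

lemma rev_ceq: "w \<in> lists J \<Longrightarrow> ceq (w @ rev w) []"
proof (induction w)
  case Nil then show ?case by (simp add: cox_eq.refl)
next
  case (Cons x w)
  have "ceq ([x] @ (w @ rev w) @ [x]) ([x] @ [] @ [x])" using Cons by (intro ceq_cong) auto
  moreover have "ceq ([] @ [x, x] @ []) ([] @ [])" using Cons by (intro cox_eq.square) auto
  ultimately show ?case by (auto intro: cox_eq.trans)
qed

lemma rho_rev: "set w \<subseteq> S \<Longrightarrow> rho (w @ rev w) v = v"
  by (induction w arbitrary: v) (auto simp: rho_append sg_sg)

end



context cox
begin

lemma short_last:
  assumes I: "I \<subseteq> J" and u: "u \<in> lists I" "ceq u y" "u \<noteq> []" "last u = s"
  shows "lg I (y @ [s]) < length u"
proof -
  have sI: "s \<in> I" using u by (metis last_in_set in_listsD)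
  have ub: "u = butlast u @ [s]" using u by (metis append_butlast_last_id)
  have "ceq (u @ [s]) (y @ [s])" using ceq_cong[OF u(2), of "[]" "[s]"] by simp
  moreover have "ceq (butlast u @ [s, s]) (butlast u)" using ceq_ss sI I by auto
  moreover have "u @ [s] = butlast u @ [s, s]" using ub by (metis append_Cons append_Nil append_assoc)
  ultimately have "ceq (butlast u) (y @ [s])" by (metis cox_eq.sym cox_eq.trans)
  moreover have "butlast u \<in> lists I" using u(1) by (metis in_set_butlastD in_listsD in_listsI)
  ultimately have "lg I (y @ [s]) \<le> length (butlast u)" by (intro lg_le)
  moreover have "length (butlast u) < length u" using u(3) by simp
  ultimately show ?thesis by (rule le_less_trans)
qed

lemma dihedral:
  assumes sJ: "s \<in> J" and tJ: "t \<in> J" and st: "s \<noteq> t" and y: "y \<in> lists {s, t}"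
    and lt: "lg {s, t} y < lg {s, t} (y @ [s])"
  shows "\<exists>a b. 0 \<le> a \<and> 0 \<le> b \<and> rho y (al s) = (\<lambda>z. a * al s z + b * al t z)"
proof -
  let ?I = "{s, t}"
  have IJ: "?I \<subseteq> J" using sJ tJ by auto
  have sS: "s \<in> S" and tS: "t \<in> S" using sJ tJ JS by auto
  obtain u where u: "u \<in> lists ?I" "length u = lg ?I y" "ceq u y" using lg_ex'[OF y] by blast
  have ry: "rho y = rho u" using ceq_rho[OF u(3)] by simp
  have noadj: "\<not> (\<exists>u1 u2 a. u = u1 @ a # a # u2)"
  proof
    assume "\<exists>u1 u2 a. u = u1 @ a # a # u2"
    then obtain u1 u2 a where ua: "u = u1 @ a # a # u2" by blast
    have aJ: "a \<in> J" using ua u(1) IJ by auto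
    have "ceq u (u1 @ u2)" using cox_eq.square[OF aJ, of E m u1 u2] ua by simp
    then have "ceq (u1 @ u2) y" using u(3) by (metis cox_eq.sym cox_eq.trans)
    moreover have "u1 @ u2 \<in> lists ?I" using u(1) ua by auto
    ultimately have "lg ?I y \<le> length (u1 @ u2)" by (intro lg_le)
    then show False using u(2) ua by simp
  qed
  show ?thesis
  proof (cases "u = []")
    case True
    then show ?thesis using ry by (rule_tac x=1 in exI, rule_tac x=0 in exI) auto
  next
    case False
    define k where "k = length u"
    obtain x' y' where xy': "(x' = s \<and> y' = t) \<or> (x' = t \<and> y' = s)" and ua: "u = alt x' y' k"
      using alt_form[OF st u(1) noadj False] k_def by blast
    obtain k' where k': "k = Suc k'" using False k_def by (cases u) auto
    have lastu: "last u \<noteq> s"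
    proof
      assume "last u = s"
      then have "lg ?I (y @ [s]) < length u" using short_last[OF IJ u(1) u(3) False] by simp
      then show False using lt u(2) by simp
    qed
    have lu: "last u = (if even k' then x' else y')" using last_alt[of x' y' k'] ua k' by simp
    have Zs: "(if even k then x' else y') = s" using lastu lu xy' k' st by auto
    define c where "c = - Bm s t"
    have rform: "rho u (al s) = (\<lambda>z. cheb c (Suc k) * al x' z + cheb c k * al y' z)"
      using lemD[OF st sS tS xy', of k] Zs ua unfolding c_def by simp
    have nonneg: "0 \<le> cheb c (Suc k) \<and> 0 \<le> cheb c k"
    proof (cases "(s, t) \<in> E")
      case True
      define M where "M = m s t"
      have M2: "2 \<le> M" using Em2[OF True] M_def by simp
      have cM: "c = cos (pi / real M)" unfolding c_def Bm_def M_def using st True by simp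
      have kM: "k < M"
      proof (rule ccontr)
        assume "\<not> k < M"
        then have kM: "k = (k - M) + M" by simp
        define p where "p = (if even (k - M) then x' else y')"
        define q where "q = (if even (k - M) then y' else x')"
        define pre where "pre = alt x' y' (k - M)"
        have u2: "u = pre @ alt p q M" using ua alt_add[of x' y' "k - M" M] kM
          unfolding p_def q_def pre_def by metis
        have pq: "(p = s \<and> q = t) \<or> (p = t \<and> q = s)" using xy' unfolding p_def q_def by auto
        have pqE: "(p, q) \<in> E" using pq True Esym by auto
        have mpq: "m p q = M" using pq M_def Emsym[OF True] by auto
        have pJ: "p \<in> J" and qJ: "q \<in> J" using pq sJ tJ by auto
        define u' where "u' = pre @ alt q p M"
        have "ceq (pre @ alt p q (m p q) @ []) (pre @ alt q p (m p q) @ [])"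
          by (rule cox_eq.braid[OF pqE pJ qJ])
        then have cu: "ceq u u'" using u2 mpq unfolding u'_def by simp
        obtain M' where M': "M = Suc M'" using M2 by (cases M) auto
        have ne1: "alt p q M \<noteq> []" "alt q p M \<noteq> []" using M' by auto
        have l1: "last u = (if even M' then p else q)"
          using last_alt[of p q M'] ne1 u2 M' by simp
        have l2: "last u' = (if even M' then q else p)"
          using last_alt[of q p M'] ne1 M' unfolding u'_def by simp
        have "last u \<in> set u" using False by simp
        then have "last u \<in> ?I" using u(1) by blast
        then have lu_t: "last u = t" using lastu by blast
        have "last u' = s"
        proof (cases "even M'")
          case True then show ?thesis using l1 l2 lu_t pq st by auto
        next
          case False then show ?thesis using l1 l2 lu_t pq st by auto
        qed
        moreover have u'I: "u' \<in> lists ?I"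
        proof -
          have "set pre \<subseteq> ?I" unfolding pre_def using alt_set[of x' y' "k - M"] xy' by auto
          moreover have "set (alt q p M) \<subseteq> ?I" using alt_set[of q p M] pq by auto
          ultimately show ?thesis unfolding u'_def by auto
        qed
        moreover have "u' \<noteq> []" unfolding u'_def using M' by simp
        moreover have "ceq u' y" using cu u(3) by (metis cox_eq.sym cox_eq.trans)
        ultimately have "lg ?I (y @ [s]) < length u'" using short_last[OF IJ] by blast
        moreover have "length u' = length u" using u2 unfolding u'_def by simp
        ultimately show False using lt u(2) by simp
      qed
      show ?thesis unfolding cM using cheb_nonneg[OF M2] kM by simp
    next
      case False
      have "c = 1" unfolding c_def Bm_def using st False by simp
      then show ?thesis by (simp add: cheb_one)
    qed
    show ?thesis
    proof (cases "x' = s")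
      case True
      then have "y' = t" using xy' st by auto
      then show ?thesis using True rform nonneg ry
        by (rule_tac x="cheb c (Suc k)" in exI, rule_tac x="cheb c k" in exI) simp
    next
      case False
      then have "x' = t" "y' = s" using xy' by auto
      then show ?thesis using rform nonneg ry
        by (rule_tac x="cheb c k" in exI, rule_tac x="cheb c (Suc k)" in exI) (auto simp: fun_eq_iff)
    qed
  qed
qed

end



context cox
begin

lemma lg_single: "x \<in> I \<Longrightarrow> lg I [x] = 1"
proof -
  assume x: "x \<in> I"
  have "lg I [x] \<le> 1" using lg_le_len[of "[x]" I] x by simp
  moreover have "odd (lg I [x])" using lg_par[of "[x]" I] x by simp
  moreover have "\<And>k::nat. k \<le> 1 \<Longrightarrow> odd k \<Longrightarrow> k = 1" by presburger
  ultimately show ?thesis by blast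
qed

lemma lg_butlast:
  assumes r: "r \<in> lists J" "length r = lg J r" "r \<noteq> []"
  shows "lg J (butlast r) = lg J r - 1" "lg J (butlast r) < lg J r"
proof -
  have rb: "r = butlast r @ [last r]" using r(3) by simp
  have bl: "butlast r \<in> lists J" using r(1) by (metis in_set_butlastD in_listsD in_listsI)
  have la: "last r \<in> J" using r(1) r(3) by (metis last_in_set in_listsD)
  have "lg J (butlast r) \<le> length (butlast r)" using lg_le_len[OF bl] .
  moreover have "lg J r \<le> lg J (butlast r) + lg J [last r]"
    using lg_app[OF bl, of "[last r]"] la rb by (metis Cons_in_lists_iff in_listsI empty_iff list.set(1))
  moreover have "lg J [last r] = 1" using lg_single la by simp
  moreover have "length (butlast r) = length r - 1" by simp
  ultimately show "lg J (butlast r) = lg J r - 1" "lg J (butlast r) < lg J r" using r(2) r(3)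
    by (simp_all add: length_greater_0_conv[symmetric])
qed

lemma key:
  "\<forall>w s. w \<in> lists J \<longrightarrow> s \<in> J \<longrightarrow> lg J w = n \<longrightarrow> lg J w < lg J (w @ [s]) \<longrightarrow> nn (rho w (al s))"
proof (induction n rule: less_induct)
  case (less n)
  show ?case
  proof (intro allI impI)
    fix w s
    assume w: "w \<in> lists J" and s: "s \<in> J" and n: "lg J w = n" and lt: "lg J w < lg J (w @ [s])"
    obtain r where r: "r \<in> lists J" "length r = n" "ceq r w" using lg_ex'[OF w] n by blast
    have rw: "rho w = rho r" using ceq_rho[OF r(3)] by simp
    show "nn (rho w (al s))"
    proof (cases "n = 0")
      case True
      then show ?thesis using r rw by (simp add: nn_def al_def)
    next
      case False
      then have rne: "r \<noteq> []" using r by auto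
      define t where "t = last r"
      define r' where "r' = butlast r"
      have rr: "r = r' @ [t]" using rne unfolding t_def r'_def by simp
      have tJ: "t \<in> J" using r(1) rne unfolding t_def by (metis last_in_set in_listsD)
      have r'J: "r' \<in> lists J" using r(1) unfolding r'_def by (metis in_set_butlastD in_listsD in_listsI)
      have lgr: "lg J r = n" using lg_inv[OF r(3)] n by simp
      have lgr': "lg J r' = n - 1" using lg_butlast[of r] r rne lgr unfolding r'_def by simp
      have ts: "t \<noteq> s"
      proof
        assume "t = s"
        then have "lg J (w @ [s]) < length r" using short_last[of J r w s] r rne unfolding t_def by auto
        then show False using lt n r(2) by simp
      qed
      define I where "I = {s, t}"
      have IJ: "I \<subseteq> J" using s tJ I_def by auto
      have sI: "s \<in> I" and tI: "t \<in> I" unfolding I_def by auto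
      define Q where "Q = (\<lambda>k. \<exists>v y. v \<in> lists J \<and> y \<in> lists I \<and> ceq (v @ y) w \<and> lg J v = k \<and> lg J v + lg I y = n)"
      have Qn: "Q (n - 1)"
        unfolding Q_def using r'J tI lgr' lg_single[OF tI] r(3) rr False
        by (rule_tac x=r' in exI, rule_tac x="[t]" in exI) auto
      define k0 where "k0 = (LEAST k. Q k)"
      have Qk0: "Q k0" unfolding k0_def using Qn by (rule LeastI)
      have k0le: "k0 \<le> n - 1" unfolding k0_def using Qn by (rule Least_le)
      obtain v y where vy: "v \<in> lists J" "y \<in> lists I" "ceq (v @ y) w" "lg J v = k0" "lg J v + lg I y = n"
        using Qk0 unfolding Q_def by blast
      have yJ: "y \<in> lists J" using vy(2) IJ by auto
      have claim1: "lg J v < lg J (v @ [x])" if xI: "x \<in> I" for x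
      proof (rule ccontr)
        assume "\<not> lg J v < lg J (v @ [x])"
        have xJ: "x \<in> J" using xI IJ by auto
        then have dec: "lg J v = Suc (lg J (v @ [x]))"
          using lg_snoc[of J v x] vy(1) \<open>\<not> lg J v < lg J (v @ [x])\<close> by auto
        have v'J: "v @ [x] \<in> lists J" using vy(1) xJ by auto
        have y'I: "x # y \<in> lists I" using vy(2) xI by auto
        have c1: "ceq ((v @ [x]) @ (x # y)) (v @ y)"
          using ceq_cong[OF cox_eq.square[OF xJ, of E m "[]" "[]"], of v y] by simp
        have c2: "ceq ((v @ [x]) @ (x # y)) w" using c1 vy(3) by (rule cox_eq.trans)
        have "lg I (x # y) \<le> lg I [x] + lg I y" using lg_app[of "[x]" I y] xI vy(2) by simp
        then have le1: "lg I (x # y) \<le> Suc (lg I y)" using lg_single[OF xI] by simp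
        have "n = lg J ((v @ [x]) @ (x # y))" using lg_inv[OF c2] n by simp
        also have "\<dots> \<le> lg J (v @ [x]) + lg J (x # y)" using lg_app[OF v'J, of "x # y"] y'I IJ by auto
        also have "lg J (x # y) \<le> lg I (x # y)" using lg_mono[OF IJ y'I] .
        finally have ge: "n \<le> lg J (v @ [x]) + lg I (x # y)" by simp
        have "Q (lg J (v @ [x]))"
          unfolding Q_def using v'J y'I c2 ge le1 dec vy(5)
          by (rule_tac x="v @ [x]" in exI, rule_tac x="x # y" in exI) auto
        then have "k0 \<le> lg J (v @ [x])" unfolding k0_def by (rule Least_le)
        then show False using dec vy(4) by simp
      qed
      have k0n: "k0 < n" using k0le False by simp
      have nvs: "nn (rho v (al s))" using less.IH[OF k0n] vy(1) vy(4) claim1[OF sI] s by blast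
      have nvt: "nn (rho v (al t))" using less.IH[OF k0n] vy(1) vy(4) claim1[OF tI] tJ by blast
      have claim3: "lg I y < lg I (y @ [s])"
      proof (rule ccontr)
        assume a: "\<not> lg I y < lg I (y @ [s])"
        then have dec: "lg I y = Suc (lg I (y @ [s]))" using lg_snoc[OF IJ vy(2) sI] by auto
        have ysI: "y @ [s] \<in> lists I" using vy(2) sI by auto
        have "ceq (v @ y @ [s]) (w @ [s])" using ceq_cong[OF vy(3), of "[]" "[s]"] by simp
        then have "lg J (w @ [s]) = lg J (v @ (y @ [s]))" using lg_inv by metis
        also have "\<dots> \<le> lg J v + lg J (y @ [s])" using lg_app[OF vy(1), of "y @ [s]"] ysI IJ by auto
        also have "lg J (y @ [s]) \<le> lg I (y @ [s])" using lg_mono[OF IJ ysI] .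
        finally have "lg J (w @ [s]) \<le> lg J v + lg I (y @ [s])" by simp
        then show False using dec vy(5) lt n by simp
      qed
      have tne: "s \<noteq> t" using ts by simp
      obtain a b where ab: "0 \<le> a" "0 \<le> b" "rho y (al s) = (\<lambda>z. a * al s z + b * al t z)"
        using dihedral[OF s tJ tne] vy(2) claim3 unfolding I_def by blast
      have "rho w = rho (v @ y)" using ceq_rho[OF vy(3)] by simp
      then have "rho w (al s) = rho v (\<lambda>z. a * al s z + b * al t z)" using ab(3) by (simp add: rho_append)
      also have "\<dots> = (\<lambda>z. a * rho v (al s) z + b * rho v (al t) z)" by (rule rho_lin)
      finally show ?thesis using nvs nvt ab unfolding nn_def by simp
    qed
  qed
qed

lemma faithful:
  assumes w: "w \<in> lists J" and id: "\<forall>s\<in>J. rho w (al s) = al s"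
  shows "ceq w []"
proof (cases "lg J w = 0")
  case True
  obtain r where r: "r \<in> lists J" "length r = lg J w" "ceq r w" using lg_ex'[OF w] by blast
  then show ?thesis using True by (auto intro: cox_eq.sym)
next
  case False
  obtain r where r: "r \<in> lists J" "length r = lg J w" "ceq r w" using lg_ex'[OF w] by blast
  have rne: "r \<noteq> []" using r False by auto
  have lgr: "lg J r = lg J w" using lg_inv[OF r(3)] .
  define s where "s = last r"
  define r' where "r' = butlast r"
  have rr: "r = r' @ [s]" using rne unfolding s_def r'_def by simp
  have sJ: "s \<in> J" using r(1) rne unfolding s_def by (metis last_in_set in_listsD)
  have r'J: "r' \<in> lists J" using r(1) unfolding r'_def by (metis in_set_butlastD in_listsD in_listsI)
  have "lg J r' < lg J r" using lg_butlast[of r] r rne lgr unfolding r'_def by simp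
  then have "lg J r' < lg J (r' @ [s])" using rr by simp
  then have nnr: "nn (rho r' (al s))" using key r'J sJ by blast
  have sS: "s \<in> S" using sJ JS by auto
  have "rho w (al s) = rho r (al s)" using ceq_rho[OF r(3)] by simp
  also have "\<dots> = rho r' (\<lambda>z. (-1) * al s z + 0 * al s z)" using rr sg_al_self[OF sS] by (simp add: rho_append)
  also have "\<dots> = (\<lambda>z. (-1) * rho r' (al s) z + 0 * rho r' (al s) z)" by (rule rho_lin)
  finally have "al s s = - rho r' (al s) s" using id sJ by (metis add.right_neutral mult_minus1 mult_zero_left)
  moreover have "0 \<le> rho r' (al s) s" using nnr unfolding nn_def by blast
  ultimately show ?thesis by (simp add: al_def)
qed

lemma faithful2:
  assumes u: "u \<in> lists J" and u': "u' \<in> lists J" and eq: "rho u = rho u'"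
  shows "ceq u u'"
proof -
  have u'S: "set u' \<subseteq> S" using u' JS by auto
  have "\<forall>s\<in>J. rho (u @ rev u') (al s) = al s"
    using eq rho_rev[OF u'S] by (simp add: rho_append)
  moreover have "u @ rev u' \<in> lists J" using u u' by auto
  ultimately have c: "ceq (u @ rev u') []" using faithful by blast
  have "ceq ((u @ rev u') @ u') ([] @ u')" using ceq_cong[OF c, of "[]" u'] by simp
  moreover have "ceq (u @ (rev u' @ u') @ []) (u @ [] @ [])"
  proof (rule ceq_cong)
    have "rev u' \<in> lists J" using u' by auto
    then show "ceq (rev u' @ u') []" using rev_ceq[of "rev u'"] by simp
  qed
  ultimately show ?thesis by (auto intro: cox_eq.trans cox_eq.sym)
qed

end

context ag
begin

lemma Sf_subset:
  assumes T: "T \<in> Sf S E m" and T': "T' \<subseteq> T"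
  shows "T' \<in> Sf S E m"
proof -
  have TS: "T \<subseteq> S" using T unfolding Sf_def by auto
  have T'S: "T' \<subseteq> S" using TS T' by auto
  interpret cT: cox S E m T using TS by unfold_locales
  interpret cT': cox S E m T' using T'S by unfold_locales
  define cls where "cls = (\<lambda>J w. {u \<in> lists J. cox_eq E m J u w})"
  define phi where "phi = (\<lambda>C::'a list set. rho (SOME u. u \<in> C))"
  have phi_eq: "phi (cls J w) = rho w" if "J \<subseteq> S" "w \<in> lists J" for J w
  proof -
    interpret cJ: cox S E m J using that by unfold_locales
    have "w \<in> cls J w" unfolding cls_def using that cox_eq.refl by blast
    then have "(SOME u. u \<in> cls J w) \<in> cls J w" by (rule someI)
    then have "cox_eq E m J (SOME u. u \<in> cls J w) w" unfolding cls_def by blast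
    then show ?thesis unfolding phi_def using cJ.ceq_rho by blast
  qed
  have finT: "finite (cls T ` lists T)" using T unfolding Sf_def coxeter_finite_def cls_def by simp
  have "phi ` cls T' ` lists T' \<subseteq> phi ` cls T ` lists T"
  proof
    fix x assume "x \<in> phi ` cls T' ` lists T'"
    then obtain w where w: "w \<in> lists T'" "x = phi (cls T' w)" by blast
    then have "x = rho w" using phi_eq T'S by simp
    moreover have "w \<in> lists T" using w T' by auto
    ultimately show "x \<in> phi ` cls T ` lists T" using phi_eq[OF TS] by (metis imageI)
  qed
  then have fin1: "finite (phi ` cls T' ` lists T')" using finT finite_subset by blast
  have inj: "inj_on phi (cls T' ` lists T')"
  proof (rule inj_onI)
    fix C1 C2 assume C1: "C1 \<in> cls T' ` lists T'" and C2: "C2 \<in> cls T' ` lists T'" and e: "phi C1 = phi C2"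
    obtain w1 where w1: "w1 \<in> lists T'" "C1 = cls T' w1" using C1 by blast
    obtain w2 where w2: "w2 \<in> lists T'" "C2 = cls T' w2" using C2 by blast
    have "rho w1 = rho w2" using e w1 w2 phi_eq T'S by simp
    then have "cox_eq E m T' w1 w2" using cT'.faithful2 w1 w2 by blast
    then show "C1 = C2" unfolding w1 w2 cls_def by (meson cox_eq.sym cox_eq.trans)
  qed
  have "finite (cls T' ` lists T')" using finite_imageD[OF fin1 inj] .
  then show ?thesis unfolding Sf_def coxeter_finite_def cls_def using T'S by simp
qed

end



context ag
begin

abbreviation aeq where "aeq \<equiv> artin_eq S E m"
abbreviation ac where "ac \<equiv> acls S E m"
abbreviation Ls where "Ls \<equiv> lists (S \<times> (UNIV :: bool set))"

lemma rho_coord: "t \<notin> set w \<Longrightarrow> rho w v t = v t"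
  by (induction w) (auto simp: sg_def al_def)

lemma F2:
  assumes t: "t \<in> S" "t \<notin> U" and v: "v \<in> lists (U \<times> (UNIV :: bool set))"
  shows "\<not> aeq [(t, True)] v"
proof
  assume "aeq [(t, True)] v"
  then have "rho (map fst [(t, True)]) = rho (map fst v)" by (rule rho_artin)
  then have "rho [t] (al t) t = rho (map fst v) (al t) t" by simp
  moreover have "t \<notin> set (map fst v)" using v t by auto
  ultimately have "rho [t] (al t) t = al t t" using rho_coord by simp
  then show False using sg_al_self[OF t(1)] by (simp add: al_def)
qed

lemma aeq_cong: "aeq u w \<Longrightarrow> aeq (x @ u @ y) (x @ w @ y)"
proof (induction rule: artin_eq.induct)
  case (refl w) then show ?case by (rule artin_eq.refl)
next
  case (sym u v) then show ?case by (blast intro: artin_eq.sym)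
next
  case (trans u v w) then show ?case by (metis artin_eq.trans)
next
  case (cancel s u b v)
  then show ?case using artin_eq.cancel[where u="x @ u" and v="v @ y" and E=E and m=m] by simp
next
  case (braid s t u v)
  then show ?case using artin_eq.braid[where u="x @ u" and v="v @ y" and S=S] by simp
qed

lemma aeq_sym: "aeq u w \<Longrightarrow> aeq w u" by (rule artin_eq.sym)
lemma aeq_trans: "aeq u v \<Longrightarrow> aeq v w \<Longrightarrow> aeq u w" by (rule artin_eq.trans)

definition ainv :: "'a word \<Rightarrow> 'a word" where
  "ainv w = rev (map (\<lambda>(s, b). (s, \<not> b)) w)"

lemma ainv_simps[simp]: "ainv [] = []" "ainv (x # w) = ainv w @ [(fst x, \<not> snd x)]"
  "ainv (u @ w) = ainv w @ ainv u"
  unfolding ainv_def by (auto simp: case_prod_beta)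

lemma ainv_lists: "v \<in> lists (U \<times> (UNIV :: bool set)) \<Longrightarrow> ainv v \<in> lists (U \<times> (UNIV :: bool set))"
  unfolding ainv_def by auto

lemma aeq_inv_r: "w \<in> Ls \<Longrightarrow> aeq (w @ ainv w) []"
proof (induction w)
  case Nil then show ?case by (simp add: artin_eq.refl)
next
  case (Cons x w)
  obtain s b where x: "x = (s, b)" by (cases x)
  have sS: "s \<in> S" using Cons.prems x by auto
  have "aeq ([x] @ (w @ ainv w) @ [(s, \<not> b)]) ([x] @ [] @ [(s, \<not> b)])"
    using Cons by (intro aeq_cong) auto
  moreover have "aeq ([] @ [(s, b), (s, \<not> b)] @ []) ([] @ [])" by (rule artin_eq.cancel[OF sS])
  ultimately show ?case using x by simp (metis aeq_trans append.left_neutral append_Cons)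
qed

lemma aeq_inv_l: "w \<in> Ls \<Longrightarrow> aeq (ainv w @ w) []"
proof (induction w)
  case Nil then show ?case by (simp add: artin_eq.refl)
next
  case (Cons x w)
  obtain s b where x: "x = (s, b)" by (cases x)
  have sS: "s \<in> S" using Cons.prems x by auto
  have "aeq (ainv w @ [(s, \<not> b), (s, \<not> \<not> b)] @ w) (ainv w @ w)" by (rule artin_eq.cancel[OF sS])
  then have "aeq (ainv w @ [(s, \<not> b), (s, b)] @ w) (ainv w @ w)" by simp
  moreover have "aeq (ainv w @ w) []" using Cons by simp
  ultimately show ?case using x by simp (metis aeq_trans append_Cons append_Nil append_assoc)
qed

lemma ac_eq: "aeq x y \<Longrightarrow> ac x = ac y"
  unfolding acls_def by (metis (no_types, lifting) aeq_sym aeq_trans)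

lemma ac_mem: "x \<in> Ls \<Longrightarrow> x \<in> ac x"
  unfolding acls_def by (auto intro: artin_eq.refl)

lemma ac_eqD: "x \<in> Ls \<Longrightarrow> ac x = ac y \<Longrightarrow> aeq x y"
  using ac_mem unfolding acls_def by blast

lemma ac_sub: "ac x \<subseteq> Ls"
  unfolding acls_def by auto

lemma ac_memD: "a \<in> ac x \<Longrightarrow> ac a = ac x"
proof -
  assume "a \<in> ac x"
  then have "aeq a x" unfolding acls_def by blast
  then show ?thesis by (rule ac_eq)
qed

lemma lcancel: "b \<in> Ls \<Longrightarrow> aeq (b @ x) (b @ y) \<Longrightarrow> aeq x y"
proof -
  assume b: "b \<in> Ls" and h: "aeq (b @ x) (b @ y)"
  have "aeq (ainv b @ (b @ x) @ []) (ainv b @ (b @ y) @ [])" using aeq_cong[OF h] .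
  moreover have "aeq ([] @ (ainv b @ b) @ x) ([] @ [] @ x)" using aeq_inv_l[OF b] by (intro aeq_cong)
  moreover have "aeq ([] @ (ainv b @ b) @ y) ([] @ [] @ y)" using aeq_inv_l[OF b] by (intro aeq_cong)
  ultimately show ?thesis by simp (metis aeq_trans aeq_sym)
qed

lemma coset_char:
  assumes w: "w \<in> Ls"
  shows "coset S E m (ac w) U = {ac (w @ v) | v. v \<in> lists (U \<times> (UNIV :: bool set))}"
proof
  show "coset S E m (ac w) U \<subseteq> {ac (w @ v) |v. v \<in> lists (U \<times> UNIV)}"
  proof
    fix x assume "x \<in> coset S E m (ac w) U"
    then obtain a v where av: "a \<in> ac w" "v \<in> lists (U \<times> UNIV)" "x = ac (a @ v)" unfolding coset_def by blast
    have "aeq a w" using av(1) unfolding acls_def by blast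
    then have "aeq (a @ v) (w @ v)" using aeq_cong[of a w "[]" v] by simp
    then show "x \<in> {ac (w @ v) |v. v \<in> lists (U \<times> UNIV)}" using av ac_eq by blast
  qed
next
  show "{ac (w @ v) |v. v \<in> lists (U \<times> UNIV)} \<subseteq> coset S E m (ac w) U"
    unfolding coset_def using ac_mem[OF w] by blast
qed

lemma coset_shift:
  assumes w: "w \<in> Ls" and a0: "a0 \<in> Ls" and U: "U \<subseteq> S"
    and v1: "v1 \<in> lists (U \<times> (UNIV :: bool set))" and e: "aeq w (a0 @ v1)"
  shows "coset S E m (ac w) U = coset S E m (ac a0) U"
proof -
  have v1S: "v1 \<in> Ls" using v1 U by auto
  have "{ac (w @ v) |v. v \<in> lists (U \<times> (UNIV :: bool set))} = {ac (a0 @ v) |v. v \<in> lists (U \<times> (UNIV :: bool set))}"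
  proof (intro set_eqI iffI)
    fix x assume "x \<in> {ac (w @ v) |v. v \<in> lists (U \<times> (UNIV :: bool set))}"
    then obtain v where v: "v \<in> lists (U \<times> (UNIV :: bool set))" "x = ac (w @ v)" by blast
    have "aeq (w @ v) (a0 @ v1 @ v)" using aeq_cong[OF e, of "[]" v] by simp
    then have "x = ac (a0 @ (v1 @ v))" using v ac_eq by simp
    moreover have "v1 @ v \<in> lists (U \<times> (UNIV :: bool set))" using v v1 by auto
    ultimately show "x \<in> {ac (a0 @ v) |v. v \<in> lists (U \<times> (UNIV :: bool set))}" by blast
  next
    fix x assume "x \<in> {ac (a0 @ v) |v. v \<in> lists (U \<times> (UNIV :: bool set))}"
    then obtain v where v: "v \<in> lists (U \<times> (UNIV :: bool set))" "x = ac (a0 @ v)" by blast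
    have "aeq (w @ ainv v1 @ v) (a0 @ v1 @ ainv v1 @ v)" using aeq_cong[OF e, of "[]" "ainv v1 @ v"] by simp
    moreover have "aeq (a0 @ (v1 @ ainv v1) @ v) (a0 @ [] @ v)" using aeq_inv_r[OF v1S] by (intro aeq_cong)
    ultimately have "aeq (w @ (ainv v1 @ v)) (a0 @ v)" by simp (metis aeq_trans)
    then have "x = ac (w @ (ainv v1 @ v))" using v ac_eq by simp
    moreover have "ainv v1 @ v \<in> lists (U \<times> (UNIV :: bool set))" using v ainv_lists[OF v1] by auto
    ultimately show "x \<in> {ac (w @ v) |v. v \<in> lists (U \<times> (UNIV :: bool set))}" by blast
  qed
  then show ?thesis using coset_char[OF w] coset_char[OF a0] by simp
qed

definition gen :: "'a set \<Rightarrow> 'a word \<Rightarrow> bool" where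
  "gen U x \<longleftrightarrow> (\<exists>v \<in> lists (U \<times> (UNIV :: bool set)). aeq x v)"

lemma gen_words:
  assumes U': "U' \<subseteq> S" and U: "U \<subseteq> S" and h: "\<forall>s\<in>U. gen U' [(s, True)]"
  shows "v \<in> lists (U \<times> (UNIV :: bool set)) \<Longrightarrow> gen U' v"
proof (induction v)
  case Nil then show ?case unfolding gen_def by (auto intro: artin_eq.refl)
next
  case (Cons x v)
  obtain s b where x: "x = (s, b)" by (cases x)
  have sU: "s \<in> U" using Cons.prems x by auto
  have sS: "s \<in> S" using sU U by auto
  obtain vs where vs: "vs \<in> lists (U' \<times> (UNIV :: bool set))" "aeq [(s, True)] vs" using h sU unfolding gen_def by blast
  have "v \<in> lists (U \<times> (UNIV :: bool set))" using Cons.prems by simp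
  then have "gen U' v" by (rule Cons.IH)
  then obtain vv where vv: "vv \<in> lists (U' \<times> (UNIV :: bool set))" "aeq v vv" unfolding gen_def by blast
  have vsS: "vs \<in> Ls" using vs U' by auto
  obtain vx where vx: "vx \<in> lists (U' \<times> (UNIV :: bool set))" "aeq [x] vx"
  proof (cases b)
    case True
    then have "x = (s, True)" using x by simp
    then show ?thesis using that[OF vs(1)] vs(2) by simp
  next
    case False
    have 1: "aeq ((s, False) # (s, True) # ainv vs) (ainv vs)"
      using artin_eq.cancel[OF sS, of E m "[]" False "ainv vs"] by simp
    have 2: "aeq ((s, False) # (s, True) # ainv vs) ((s, False) # vs @ ainv vs)"
      using aeq_cong[OF vs(2), of "[(s, False)]" "ainv vs"] by simp
    have 3: "aeq ((s, False) # vs @ ainv vs) [(s, False)]"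
      using aeq_cong[OF aeq_inv_r[OF vsS], of "[(s, False)]" "[]"] by simp
    have "aeq [(s, False)] (ainv vs)"
      by (rule aeq_trans[OF aeq_sym[OF 3] aeq_trans[OF aeq_sym[OF 2] 1]])
    moreover have "x = (s, False)" using x False by simp
    ultimately show ?thesis using that[OF ainv_lists[OF vs(1)]] by simp
  qed
  have a1: "aeq (x # v) (x # vv)" using aeq_cong[OF vv(2), of "[x]" "[]"] by simp
  have a2: "aeq (x # vv) (vx @ vv)" using aeq_cong[OF vx(2), of "[]" vv] by simp
  have "aeq (x # v) (vx @ vv)" by (rule aeq_trans[OF a1 a2])
  moreover have "vx @ vv \<in> lists (U' \<times> (UNIV :: bool set))" using vx vv by auto
  ultimately show ?case unfolding gen_def by blast
qed

lemma mem_coset_gen: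
  assumes w: "w \<in> Ls" and s: "s \<in> S"
    and h: "ac (w @ [(s, True)]) \<in> coset S E m (ac w) U"
  shows "gen U [(s, True)]"
proof -
  obtain v where v: "v \<in> lists (U \<times> (UNIV :: bool set))" "ac (w @ [(s, True)]) = ac (w @ v)"
    using h coset_char[OF w] by auto
  have "w @ [(s, True)] \<in> Ls" using w s by auto
  then have "aeq (w @ [(s, True)]) (w @ v)" using v(2) by (rule ac_eqD)
  then have "aeq [(s, True)] v" using lcancel[OF w] by blast
  then show ?thesis using v(1) unfolding gen_def by blast
qed

lemma coset_mono_gen:
  assumes w: "w \<in> Ls" and U: "U \<subseteq> S" and U': "U' \<subseteq> S" and h: "\<forall>s\<in>U. gen U' [(s, True)]"
  shows "coset S E m (ac w) U \<subseteq> coset S E m (ac w) U'"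
proof
  fix x assume "x \<in> coset S E m (ac w) U"
  then obtain v where v: "v \<in> lists (U \<times> (UNIV :: bool set))" "x = ac (w @ v)" using coset_char[OF w] by auto
  obtain v' where v': "v' \<in> lists (U' \<times> (UNIV :: bool set))" "aeq v v'"
    using gen_words[OF U' U h v(1)] unfolding gen_def by blast
  have "aeq (w @ v @ []) (w @ v' @ [])" using v'(2) by (intro aeq_cong)
  then have "x = ac (w @ v')" using v(2) ac_eq by simp
  then show "x \<in> coset S E m (ac w) U'" using coset_char[OF w] v'(1) by blast
qed

lemma F2gen: "t \<in> S \<Longrightarrow> t \<notin> U \<Longrightarrow> \<not> gen U [(t, True)]"
  unfolding gen_def using F2 by blast

end



context ag
begin

abbreviation AM where "AM \<equiv> artin_monoid S E m"

lemma AM_D: "\<beta> \<in> AM \<Longrightarrow> \<exists>b \<in> pos_words S. \<beta> = ac b"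
  unfolding artin_monoid_def by blast

lemma pos_Ls: "b \<in> pos_words U \<Longrightarrow> U \<subseteq> S \<Longrightarrow> b \<in> Ls"
  unfolding pos_words_def by auto

lemma pos_lists: "b \<in> pos_words U \<Longrightarrow> b \<in> lists (U \<times> (UNIV :: bool set))"
  unfolding pos_words_def by auto

lemma simT_coset:
  assumes U: "U \<subseteq> S" and h: "simT S E m U \<gamma> \<delta>"
  shows "coset S E m \<gamma> U = coset S E m \<delta> U"
proof -
  obtain a b t t' where abt: "a \<in> \<gamma>" "b \<in> \<delta>" "t \<in> pos_words U" "t' \<in> pos_words U"
    "ac (a @ t) = ac (b @ t')" and gd: "\<gamma> \<in> AM" "\<delta> \<in> AM"
    using h unfolding simT_def by blast
  obtain c where c: "\<gamma> = ac c" using gd AM_D by blast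
  obtain d where d: "\<delta> = ac d" using gd AM_D by blast
  have aL: "a \<in> Ls" using abt(1) c ac_sub by blast
  have bL: "b \<in> Ls" using abt(2) d ac_sub by blast
  have ga: "\<gamma> = ac a" using ac_memD abt(1) c by simp
  have db: "\<delta> = ac b" using ac_memD abt(2) d by simp
  have tL: "t \<in> Ls" "t' \<in> Ls" using abt(3,4) U pos_Ls by auto
  have "coset S E m (ac (a @ t)) U = coset S E m (ac a) U"
    by (rule coset_shift[of "a @ t" a U t]) (use aL tL U pos_lists[OF abt(3)] in \<open>auto intro: artin_eq.refl\<close>)
  moreover have "coset S E m (ac (b @ t')) U = coset S E m (ac b) U"
    by (rule coset_shift[of "b @ t'" b U t']) (use bL tL U pos_lists[OF abt(4)] in \<open>auto intro: artin_eq.refl\<close>)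
  ultimately show ?thesis using ga db abt(5) by simp
qed

lemma simT_star_coset:
  assumes U: "U \<subseteq> S"
  shows "(simT S E m U)\<^sup>*\<^sup>* \<gamma> \<delta> \<Longrightarrow> coset S E m \<gamma> U = coset S E m \<delta> U"
  by (induction rule: rtranclp_induct) (auto dest: simT_coset[OF U])

lemma mcls_snoc:
  assumes b: "b \<in> pos_words S" and s: "s \<in> U" and U: "U \<subseteq> S"
  shows "ac (b @ [(s, True)]) \<in> mcls S E m U (ac b)"
proof -
  have bs: "b @ [(s, True)] \<in> pos_words S" using b s U unfolding pos_words_def by auto
  have "simT S E m U (ac b) (ac (b @ [(s, True)]))"
    unfolding simT_def
  proof (intro conjI exI)
    show "ac b \<in> AM" using b unfolding artin_monoid_def by blast
    show "ac (b @ [(s, True)]) \<in> AM" using bs unfolding artin_monoid_def by blast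
    show "b \<in> ac b" using ac_mem pos_Ls[OF b] by auto
    show "b @ [(s, True)] \<in> ac (b @ [(s, True)])" using ac_mem pos_Ls[OF bs] by auto
    show "[(s, True)] \<in> pos_words U" using s unfolding pos_words_def by auto
    show "[] \<in> pos_words U" unfolding pos_words_def by auto
    show "ac (b @ [(s, True)]) = ac ((b @ [(s, True)]) @ [])" by simp
  qed
  then show ?thesis unfolding mcls_def by auto
qed

lemma M3:
  assumes \<beta>: "\<beta> \<in> AM" and \<beta>': "\<beta>' \<in> AM" and U: "U \<subseteq> S" and U': "U' \<subseteq> S"
    and sub: "mcls S E m U \<beta> \<subseteq> mcls S E m U' \<beta>'"
  shows "coset S E m \<beta> U \<subseteq> coset S E m \<beta>' U'"
proof -
  obtain b where b: "b \<in> pos_words S" "\<beta> = ac b" using \<beta> AM_D by blast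
  have bL: "b \<in> Ls" using pos_Ls[OF b(1)] by simp
  have "\<beta> \<in> mcls S E m U \<beta>" unfolding mcls_def by simp
  then have "(simT S E m U')\<^sup>*\<^sup>* \<beta>' \<beta>" using sub unfolding mcls_def by blast
  then have e1: "coset S E m \<beta>' U' = coset S E m \<beta> U'" using simT_star_coset[OF U'] by blast
  have g: "\<forall>s\<in>U. gen U' [(s, True)]"
  proof
    fix s assume s: "s \<in> U"
    have sS: "s \<in> S" using s U by auto
    have "ac (b @ [(s, True)]) \<in> mcls S E m U' \<beta>'" using mcls_snoc[OF b(1) s U] sub b(2) by blast
    then have "(simT S E m U')\<^sup>*\<^sup>* \<beta>' (ac (b @ [(s, True)]))" unfolding mcls_def by blast
    then have e2: "coset S E m \<beta>' U' = coset S E m (ac (b @ [(s, True)])) U'" using simT_star_coset[OF U'] by blast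
    have bsL: "b @ [(s, True)] \<in> Ls" using bL sS by auto
    have "ac ((b @ [(s, True)]) @ []) \<in> {ac ((b @ [(s, True)]) @ v) | v. v \<in> lists (U' \<times> (UNIV :: bool set))}"
      by blast
    then have "ac (b @ [(s, True)]) \<in> coset S E m (ac (b @ [(s, True)])) U'"
      using coset_char[OF bsL, of U'] by simp
    then have "ac (b @ [(s, True)]) \<in> coset S E m (ac b) U'" using e1 e2 b(2) by simp
    then show "gen U' [(s, True)]" using mem_coset_gen[OF bL sS] by simp
  qed
  have "coset S E m \<beta> U \<subseteq> coset S E m \<beta> U'" using coset_mono_gen[OF bL U U' g] b(2) by simp
  then show ?thesis using e1 by simp
qed

lemma M3eq:
  assumes "\<beta> \<in> AM" "\<beta>' \<in> AM" "U \<subseteq> S" "U' \<subseteq> S" "mcls S E m U \<beta> = mcls S E m U' \<beta>'"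
  shows "coset S E m \<beta> U = coset S E m \<beta>' U'"
proof -
  have "coset S E m \<beta> U \<subseteq> coset S E m \<beta>' U'" by (rule M3) (use assms in auto)
  moreover have "coset S E m \<beta>' U' \<subseteq> coset S E m \<beta> U" by (rule M3) (use assms in auto)
  ultimately show ?thesis by (rule antisym)
qed

lemma mcls_mono:
  assumes "U \<subseteq> U'"
  shows "mcls S E m U \<beta> \<subseteq> mcls S E m U' \<beta>"
proof -
  have "simT S E m U x y \<Longrightarrow> simT S E m U' x y" for x y
    unfolding simT_def pos_words_def using assms by (meson lists_mono subset_refl Sigma_mono subsetD)
  then have "(simT S E m U)\<^sup>*\<^sup>* x y \<Longrightarrow> (simT S E m U')\<^sup>*\<^sup>* x y" for x y
    by (metis mono_rtranclp)
  then show ?thesis unfolding mcls_def by blast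
qed

lemma toggle_sub: "T0 \<subseteq> T2 \<Longrightarrow> s \<in> T2 \<Longrightarrow> toggle T0 s \<subseteq> T2"
  unfolding toggle_def by auto

lemma iota_simplex:
  assumes \<beta>: "\<beta> \<in> AM" and T2: "T2 \<in> Sf S E m" and T02: "T0 \<subseteq> T2"
  shows "iota_set S E m {mcls S E m (toggle T0 s) \<beta> | s. s \<in> T2 - T1} =
         {coset S E m \<beta> (toggle T0 s) | s. s \<in> T2 - T1}"
proof (intro set_eqI iffI)
  have T2S: "T2 \<subseteq> S" using T2 unfolding Sf_def by auto
  fix x
  {
    assume "x \<in> iota_set S E m {mcls S E m (toggle T0 s) \<beta> | s. s \<in> T2 - T1}"
    then obtain \<alpha>' T' s where a: "x = coset S E m \<alpha>' T'" "\<alpha>' \<in> AM" "T' \<in> Sf S E m"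
      "mcls S E m T' \<alpha>' = mcls S E m (toggle T0 s) \<beta>" "s \<in> T2 - T1"
      unfolding iota_set_def by blast
    have "T' \<subseteq> S" using a(3) unfolding Sf_def by auto
    moreover have "toggle T0 s \<subseteq> S" using toggle_sub[OF T02, of s] a(5) T2S by auto
    ultimately have "x = coset S E m \<beta> (toggle T0 s)" using M3eq[OF a(2) \<beta> _ _ a(4)] a(1) by simp
    then show "x \<in> {coset S E m \<beta> (toggle T0 s) | s. s \<in> T2 - T1}" using a(5) by blast
  }
  {
    assume "x \<in> {coset S E m \<beta> (toggle T0 s) | s. s \<in> T2 - T1}"
    then obtain s where s: "x = coset S E m \<beta> (toggle T0 s)" "s \<in> T2 - T1" by blast
    have "toggle T0 s \<in> Sf S E m" using Sf_subset[OF T2 toggle_sub[OF T02]] s(2) by simp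
    then show "x \<in> iota_set S E m {mcls S E m (toggle T0 s) \<beta> | s. s \<in> T2 - T1}"
      unfolding iota_set_def using s \<beta> by blast
  }
qed

end



theorem lemma5p7:
  fixes S :: "'a set" and E :: "('a \<times> 'a) set" and m :: "'a \<Rightarrow> 'a \<Rightarrow> nat"
    and \<alpha> :: "'a word set" and T :: "'a set"
  assumes "artin_graph S E m"
    and "\<alpha> \<in> artin_monoid S E m"
    and "T \<in> Sf S E m"
  shows "full_subcomplex (iota_set S E m ` uplinkP S E m (mcls S E m T \<alpha>))
                         (uplinkD S E m (coset S E m \<alpha> T))"
proof -
  interpret ag S E m using assms(1) by unfold_locales
  have TS: "T \<subseteq> S" using assms(3) unfolding Sf_def by auto
  have Sf_S: "\<And>X. X \<in> Sf S E m \<Longrightarrow> X \<subseteq> S" unfolding Sf_def by auto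
  obtain a0 where a0: "a0 \<in> pos_words S" "\<alpha> = ac a0" using assms(2) AM_D by blast
  have a0L: "a0 \<in> Ls" using pos_Ls[OF a0(1)] by simp
  have part1: "iota_set S E m ` uplinkP S E m (mcls S E m T \<alpha>) \<subseteq> uplinkD S E m (coset S E m \<alpha> T)"
  proof
    fix x assume "x \<in> iota_set S E m ` uplinkP S E m (mcls S E m T \<alpha>)"
    then obtain \<sigma>' where x: "x = iota_set S E m \<sigma>'" and s': "\<sigma>' \<in> uplinkP S E m (mcls S E m T \<alpha>)" by blast
    from s' have up: "\<forall>u\<in>\<sigma>'. mcls S E m T \<alpha> \<subseteq> u" and "\<sigma>' \<in> linkP S E m (mcls S E m T \<alpha>)"
      unfolding uplinkP_def by auto
    then obtain \<beta> T0 T1 T2 where L: "\<beta> \<in> AM" "T1 \<in> Sf S E m" "T2 \<in> Sf S E m" "T1 \<subset> T2"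
      "T1 \<subseteq> T0" "T0 \<subseteq> T2" "mcls S E m T0 \<beta> = mcls S E m T \<alpha>"
      "\<sigma>' = {mcls S E m (toggle T0 s) \<beta> | s. s \<in> T2 - T1}"
      unfolding linkP_def by blast
    have T2S: "T2 \<subseteq> S" using Sf_S[OF L(3)] .
    have T0S: "T0 \<subseteq> S" using L(6) T2S by auto
    have xe: "x = {coset S E m \<beta> (toggle T0 s) | s. s \<in> T2 - T1}"
      using x L(8) iota_simplex[OF L(1) L(3) L(6)] by simp
    obtain b where b: "b \<in> pos_words S" "\<beta> = ac b" using L(1) AM_D by blast
    have g: "\<beta> \<in> artin_group S E m" unfolding artin_group_def using b pos_Ls by blast
    have c0: "coset S E m \<beta> T0 = coset S E m \<alpha> T" using M3eq[OF L(1) assms(2) T0S TS L(7)] .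
    have "x \<in> linkD S E m (coset S E m \<alpha> T)"
      unfolding linkD_def xe using g L(2-6) c0 by blast
    moreover have "\<forall>u\<in>x. coset S E m \<alpha> T \<subseteq> u"
    proof
      fix u assume "u \<in> x"
      then obtain s where s: "s \<in> T2 - T1" "u = coset S E m \<beta> (toggle T0 s)" using xe by blast
      have "mcls S E m (toggle T0 s) \<beta> \<in> \<sigma>'" using L(8) s by blast
      then have sub: "mcls S E m T \<alpha> \<subseteq> mcls S E m (toggle T0 s) \<beta>" using up by blast
      have "toggle T0 s \<subseteq> S" using toggle_sub[OF L(6), of s] s T2S by auto
      then show "coset S E m \<alpha> T \<subseteq> u" using M3[OF assms(2) L(1) TS _ sub] s by simp
    qed
    ultimately show "x \<in> uplinkD S E m (coset S E m \<alpha> T)" unfolding uplinkD_def by blast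
  qed
  have part2: "\<sigma> \<in> iota_set S E m ` uplinkP S E m (mcls S E m T \<alpha>)"
    if s: "\<sigma> \<in> uplinkD S E m (coset S E m \<alpha> T)" for \<sigma>
  proof -
    from s have up: "\<forall>u\<in>\<sigma>. coset S E m \<alpha> T \<subseteq> u" and "\<sigma> \<in> linkD S E m (coset S E m \<alpha> T)"
      unfolding uplinkD_def by auto
    then obtain g T0 T1 T2 where L: "g \<in> artin_group S E m" "T1 \<in> Sf S E m" "T2 \<in> Sf S E m" "T1 \<subset> T2"
      "T1 \<subseteq> T0" "T0 \<subseteq> T2" "coset S E m g T0 = coset S E m \<alpha> T"
      "\<sigma> = {coset S E m g (toggle T0 s) | s. s \<in> T2 - T1}"
      unfolding linkD_def by blast
    have T2S: "T2 \<subseteq> S" using Sf_S[OF L(3)] .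
    have T0S: "T0 \<subseteq> S" using L(6) T2S by auto
    obtain w where w: "w \<in> Ls" "g = ac w" using L(1) unfolding artin_group_def by blast
    have "ac (w @ []) \<in> {ac (w @ v) | v. v \<in> lists (T0 \<times> (UNIV :: bool set))}" by blast
    then have "ac w \<in> coset S E m (ac w) T0" using coset_char[OF w(1), of T0] by simp
    then have "ac w \<in> coset S E m (ac a0) T" using L(7) w(2) a0(2) by simp
    then obtain v1 where v1: "v1 \<in> lists (T \<times> (UNIV :: bool set))" "ac w = ac (a0 @ v1)"
      using coset_char[OF a0L, of T] by blast
    have wa: "aeq w (a0 @ v1)" using ac_eqD[OF w(1) v1(2)] .
    have cwT: "coset S E m (ac w) T = coset S E m (ac a0) T"
      using coset_shift[OF w(1) a0L TS v1(1) wa] .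
    have eqT: "coset S E m (ac w) T0 = coset S E m (ac w) T" using cwT L(7) w(2) a0(2) by simp
    have memw: "ac (w @ [(t, True)]) \<in> coset S E m (ac w) U" if "t \<in> U" for t U
    proof -
      have "[(t, True)] \<in> lists (U \<times> (UNIV :: bool set))" using that by auto
      then have "ac (w @ [(t, True)]) \<in> {ac (w @ v) | v. v \<in> lists (U \<times> (UNIV :: bool set))}" by blast
      then show ?thesis using coset_char[OF w(1), of U] by simp
    qed
    have T0T: "T0 = T"
    proof
      show "T0 \<subseteq> T"
      proof
        fix t assume t: "t \<in> T0"
        have "ac (w @ [(t, True)]) \<in> coset S E m (ac w) T" using memw[OF t] eqT by simp
        then have "gen T [(t, True)]" using mem_coset_gen[OF w(1)] t T0S by auto
        then show "t \<in> T" using F2gen t T0S by blast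
      qed
      show "T \<subseteq> T0"
      proof
        fix t assume t: "t \<in> T"
        have "ac (w @ [(t, True)]) \<in> coset S E m (ac w) T0" using memw[OF t] eqT by simp
        then have "gen T0 [(t, True)]" using mem_coset_gen[OF w(1)] t TS by auto
        then show "t \<in> T0" using F2gen t TS by blast
      qed
    qed
    have T1T: "T1 = T"
    proof (rule ccontr)
      assume "T1 \<noteq> T"
      then obtain s where s: "s \<in> T0" "s \<notin> T1" using L(5) T0T by blast
      have sS: "s \<in> S" using s T0S by auto
      have tg: "toggle T0 s = T0 - {s}" unfolding toggle_def using s by simp
      have "coset S E m g (toggle T0 s) \<in> \<sigma>" using L(8) s L(6) by blast
      then have "coset S E m \<alpha> T \<subseteq> coset S E m (ac w) (T0 - {s})" using up tg w(2) by simp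
      moreover have "ac (w @ [(s, True)]) \<in> coset S E m \<alpha> T" using memw[OF s(1)] eqT cwT a0(2) by simp
      ultimately have "ac (w @ [(s, True)]) \<in> coset S E m (ac w) (T0 - {s})" by blast
      then have "gen (T0 - {s}) [(s, True)]" using mem_coset_gen[OF w(1) sS] by simp
      then show False using F2gen[OF sS] by blast
    qed
    have sig: "\<sigma> = {coset S E m \<alpha> (toggle T s) | s. s \<in> T2 - T}"
    proof -
      have "coset S E m g (toggle T s) = coset S E m \<alpha> (toggle T s)" if "s \<in> T2 - T" for s
      proof -
        have tg: "toggle T s = insert s T" unfolding toggle_def using that by simp
        have U: "insert s T \<subseteq> S" using that T2S TS by auto
        have "v1 \<in> lists (insert s T \<times> (UNIV :: bool set))" using v1(1) by auto
        then show ?thesis using coset_shift[OF w(1) a0L U _ wa] tg w(2) a0(2) by simp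
      qed
      then show ?thesis using L(8) T0T T1T by auto
    qed
    define \<sigma>' where "\<sigma>' = {mcls S E m (toggle T s) \<alpha> | s. s \<in> T2 - T}"
    have "\<sigma>' \<in> linkP S E m (mcls S E m T \<alpha>)"
      unfolding linkP_def \<sigma>'_def using assms(2) assms(3) L(3) L(4) T1T L(6) T0T by blast
    moreover have "\<forall>u\<in>\<sigma>'. mcls S E m T \<alpha> \<subseteq> u"
    proof
      fix u assume "u \<in> \<sigma>'"
      then obtain s where s: "s \<in> T2 - T" "u = mcls S E m (toggle T s) \<alpha>" unfolding \<sigma>'_def by blast
      have "T \<subseteq> toggle T s" unfolding toggle_def using s by auto
      then show "mcls S E m T \<alpha> \<subseteq> u" using mcls_mono s by simp
    qed
    ultimately have "\<sigma>' \<in> uplinkP S E m (mcls S E m T \<alpha>)" unfolding uplinkP_def by blast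
    moreover have "iota_set S E m \<sigma>' = \<sigma>"
      unfolding \<sigma>'_def sig using iota_simplex[OF assms(2) L(3)] L(6) T0T by simp
    ultimately show ?thesis by blast
  qed
  show ?thesis unfolding full_subcomplex_def using part1 part2 by blast
qed



end
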